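(* Let $G=(V,E)$ be a transient, connected, simple, locally finite graph with fixed vertex $o$ and fixed rotor mechanism $(m_x)_{x\in V}$. If $\rho_{\min}$ is a rotor configuration such that $w(\rho_{\min}(x))\le w(x,y)$ for every $x\in V$ and every outgoing edge $(x,y)$ of $x$, then for any $n\geq1$ and any $t\geq n$, \[ \frac{I_t(\rho_{\min},n)}{n}\geq \alpha_G. \]
   Context: For $x\in V$, $\mathcal{E}_x$ is the set of outgoing directed edges $(x,y)$ with $y$ a neighbor of $x$, and $\deg(x)=|\mathcal{E}_x|$. A rotor mechanism is a choice, for each $x$, of a bijection $m_x:\mathcal{E}_x\to\mathcal{E}_x$ with exactly one orbit. A rotor configuration is a map $\rho$ with $\rho(x)\in\mathcal{E}_x$ for each $x$. $\mathcal{G}(x)$ is the expected number of visits to $x$ by simple random walk on $G$ started at $o$; $\alpha_G$ is the probability that simple random walk started at $o$ never returns to $o$. Weight of a directed edge $(x,y)$: writing $(x,y_i):=m_x^i(x,y)$, \[ w(x,y):=\frac{-1}{\deg(x)}\sum_{i=0}^{\deg(x)-1} i\,\frac{\mathcal{G}(y_{i+1})}{\deg(y_{i+1})}. \] Experiment: given an initial rotor configuration $\rho$ and $n\ge1$, define $X_t^{(0)},\dots,X_t^{(n-1)}$ and $\rho_t$ ($t\ge0$) by: $X_0^{(i)}=o$ for all $i$, $\rho_0=\rho$. Let $i_t:=t+1\bmod n$. Particle $i$ has returned to $o$ by time $t$ if $X_t^{(i)}=o$ and $X_s^{(i)}\ne o$ for some $s<t$. If particle $i_t$ has returned to $o$ by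 time $t$, then $\rho_{t+1}=\rho_t$ and all positions stay the same. Otherwise $\rho_{t+1}(x)=m_x(\rho_t(x))$ for $x=X_t^{(i_t)}$ and $\rho_{t+1}(x)=\rho_t(x)$ otherwise; $X_{t+1}^{(i_t)}$ is the target vertex of $\rho_{t+1}(X_t^{(i_t)})$ and $X_{t+1}^{(i)}=X_t^{(i)}$ for $i\ne i_t$. $I_t(\rho,n)$ is the number of particles $i\in\{0,\dots,n-1\}$ that have not returned to $o$ by time $t$. *)

theory Defs
  imports Complex_Main
begin

text \<open>The vertex set V is the whole type 'v; the graph is given by a
symmetric irreflexive adjacency relation E.  Since the graph is simple, the
outgoing edge (x,y) is identified with its target y, so the set of outgoing
edges of x is identified with the set of neighbours of x.\<close>

definition nbrs :: "('v \<Rightarrow> 'v \<Rightarrow> bool) \<Rightarrow> 'v \<Rightarrow> 'v set" where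
  "nbrs E x = {y. E x y}"

definition deg :: "('v \<Rightarrow> 'v \<Rightarrow> bool) \<Rightarrow> 'v \<Rightarrow> nat" where
  "deg E x = card (nbrs E x)"

definition simple_graph :: "('v \<Rightarrow> 'v \<Rightarrow> bool) \<Rightarrow> bool" where
  "simple_graph E \<longleftrightarrow> (\<forall>x. \<not> E x x) \<and> (\<forall>x y. E x y \<longrightarrow> E y x)"

definition locally_finite :: "('v \<Rightarrow> 'v \<Rightarrow> bool) \<Rightarrow> bool" where
  "locally_finite E \<longleftrightarrow> (\<forall>x. finite (nbrs E x))"

definition connected_graph :: "('v \<Rightarrow> 'v \<Rightarrow> bool) \<Rightarrow> bool" where
  "connected_graph E \<longleftrightarrow> (\<forall>x y. (x, y) \<in> {(a, b). E a b}\<^sup>*)"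

primrec walk_prob :: "('v \<Rightarrow> 'v \<Rightarrow> bool) \<Rightarrow> 'v \<Rightarrow> nat \<Rightarrow> 'v \<Rightarrow> real" where
  "walk_prob E v0 0 x = (if x = v0 then 1 else 0)"
| "walk_prob E v0 (Suc k) y = (\<Sum>z\<in>{z. E z y}. walk_prob E v0 k z / real (deg E z))"

text \<open>Green function: expected number of visits to x (time 0 included).\<close>

definition green :: "('v \<Rightarrow> 'v \<Rightarrow> bool) \<Rightarrow> 'v \<Rightarrow> 'v \<Rightarrow> real" where
  "green E v0 x = (\<Sum>k. walk_prob E v0 k x)"

text \<open>taboo_prob E v0 k x = probability that the walk started at v0 is at x at
time k and has not visited v0 at any time 1,...,k-1.  Hence for k \<ge> 1,
taboo_prob E v0 k v0 is the probability that the first return to v0 happens at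
time k.\<close>

primrec taboo_prob :: "('v \<Rightarrow> 'v \<Rightarrow> bool) \<Rightarrow> 'v \<Rightarrow> nat \<Rightarrow> 'v \<Rightarrow> real" where
  "taboo_prob E v0 0 x = (if x = v0 then 1 else 0)"
| "taboo_prob E v0 (Suc k) y =
     (\<Sum>z\<in>{z. E z y}. (if z = v0 \<and> 0 < k then 0 else taboo_prob E v0 k z / real (deg E z)))"

definition return_prob :: "('v \<Rightarrow> 'v \<Rightarrow> bool) \<Rightarrow> 'v \<Rightarrow> real" where
  "return_prob E v0 = (\<Sum>k. taboo_prob E v0 (Suc k) v0)"

definition escape_prob :: "('v \<Rightarrow> 'v \<Rightarrow> bool) \<Rightarrow> 'v \<Rightarrow> real" where
  "escape_prob E v0 = 1 - return_prob E v0"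

definition transient :: "('v \<Rightarrow> 'v \<Rightarrow> bool) \<Rightarrow> 'v \<Rightarrow> bool" where
  "transient E v0 \<longleftrightarrow> return_prob E v0 < 1"

definition rotor_mechanism :: "('v \<Rightarrow> 'v \<Rightarrow> bool) \<Rightarrow> ('v \<Rightarrow> 'v \<Rightarrow> 'v) \<Rightarrow> bool" where
  "rotor_mechanism E m \<longleftrightarrow>
     (\<forall>x. bij_betw (m x) (nbrs E x) (nbrs E x) \<and> nbrs E x \<noteq> {} \<and>
          (\<forall>y\<in>nbrs E x. \<forall>z\<in>nbrs E x. \<exists>k. (m x ^^ k) y = z))"

definition rotor_config :: "('v \<Rightarrow> 'v \<Rightarrow> bool) \<Rightarrow> ('v \<Rightarrow> 'v) \<Rightarrow> bool" where
  "rotor_config E \<rho> \<longleftrightarrow> (\<forall>x. \<rho> x \<in> nbrs E x)"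

definition weight :: "('v \<Rightarrow> 'v \<Rightarrow> bool) \<Rightarrow> 'v \<Rightarrow> ('v \<Rightarrow> 'v \<Rightarrow> 'v) \<Rightarrow> 'v \<Rightarrow> 'v \<Rightarrow> real" where
  "weight E v0 m x y =
     (-1 / real (deg E x)) *
     (\<Sum>i<deg E x. real i * (green E v0 ((m x ^^ (Suc i)) y) / real (deg E ((m x ^^ (Suc i)) y))))"

text \<open>rotor_hist m v0 \<rho> n t is the list of states (\<rho>_s, X_s) for s = 0..t,
where X_s i is the position of particle i at time s.\<close>

primrec rotor_hist ::
  "('v \<Rightarrow> 'v \<Rightarrow> 'v) \<Rightarrow> 'v \<Rightarrow> ('v \<Rightarrow> 'v) \<Rightarrow> nat \<Rightarrow> nat \<Rightarrow> (('v \<Rightarrow> 'v) \<times> (nat \<Rightarrow> 'v)) list" where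
  "rotor_hist m v0 \<rho> n 0 = [(\<rho>, \<lambda>i. v0)]"
| "rotor_hist m v0 \<rho> n (Suc t) =
     (let hs = rotor_hist m v0 \<rho> n t;
          r = fst (hs ! t);
          X = snd (hs ! t);
          i = Suc t mod n
      in hs @ [if X i = v0 \<and> (\<exists>s<t. snd (hs ! s) i \<noteq> v0) then (r, X)
               else (let x = X i; r' = r(x := m x (r x)) in (r', X(i := r' x)))])"

definition pos :: "('v \<Rightarrow> 'v \<Rightarrow> 'v) \<Rightarrow> 'v \<Rightarrow> ('v \<Rightarrow> 'v) \<Rightarrow> nat \<Rightarrow> nat \<Rightarrow> nat \<Rightarrow> 'v" where
  "pos m v0 \<rho> n t i = snd (rotor_hist m v0 \<rho> n t ! t) i"

definition returned :: "('v \<Rightarrow> 'v \<Rightarrow> 'v) \<Rightarrow> 'v \<Rightarrow> ('v \<Rightarrow> 'v) \<Rightarrow> nat \<Rightarrow> nat \<Rightarrow> nat \<Rightarrow> bool" where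
  "returned m v0 \<rho> n t i \<longleftrightarrow> pos m v0 \<rho> n t i = v0 \<and> (\<exists>s<t. pos m v0 \<rho> n s i \<noteq> v0)"

definition I_count :: "('v \<Rightarrow> 'v \<Rightarrow> 'v) \<Rightarrow> 'v \<Rightarrow> ('v \<Rightarrow> 'v) \<Rightarrow> nat \<Rightarrow> nat \<Rightarrow> nat" where
  "I_count m v0 \<rho> n t = card {i. i < n \<and> \<not> returned m v0 \<rho> n t i}"

end

theory Submission imports Defs begin


locale grw =
  fixes E :: "'v \<Rightarrow> 'v \<Rightarrow> bool" and v0 :: 'v
  assumes sym: "E x y \<Longrightarrow> E y x" and lf: "finite (nbrs E x)" and ne: "nbrs E x \<noteq> {}"
begin

lemma Nin: "{z. E z y} = nbrs E y"
  using sym by (auto simp: nbrs_def)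

lemma degpos: "0 < deg E x"
  using lf ne by (simp add: deg_def card_gt_0_iff)

lemma wp_Suc: "walk_prob E v0 (Suc k) y = (\<Sum>z\<in>nbrs E y. walk_prob E v0 k z / real (deg E z))"
  by (simp add: Nin)

lemma tp_Suc: "taboo_prob E v0 (Suc k) y =
   (\<Sum>z\<in>nbrs E y. (if z = v0 \<and> 0 < k then 0 else taboo_prob E v0 k z / real (deg E z)))"
  by (simp add: Nin)

declare walk_prob.simps(2)[simp del] taboo_prob.simps(2)[simp del]

lemma wp_nonneg: "0 \<le> walk_prob E v0 k x"
  by (induction k arbitrary: x) (auto simp: wp_Suc intro!: sum_nonneg divide_nonneg_nonneg)

lemma tp_nonneg: "0 \<le> taboo_prob E v0 k x"
  by (induction k arbitrary: x) (auto simp: tp_Suc intro!: sum_nonneg divide_nonneg_nonneg)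

primrec B :: "nat \<Rightarrow> 'v set" where
  "B 0 = {v0}"
| "B (Suc k) = B k \<union> (\<Union>z\<in>B k. nbrs E z)"

lemma B_finite: "finite (B k)"
  by (induction k) (auto simp: lf)

lemma v0_B: "v0 \<in> B k"
  by (induction k) auto

lemma tp_supp: "taboo_prob E v0 k x \<noteq> 0 \<Longrightarrow> x \<in> B k"
proof (induction k arbitrary: x)
  case 0 then show ?case by (auto split: if_splits)
next
  case (Suc k)
  have "(\<Sum>z\<in>nbrs E x. (if z = v0 \<and> 0 < k then 0 else taboo_prob E v0 k z / real (deg E z))) \<noteq> 0"
    using Suc.prems tp_Suc[of k x] by (simp only: not_False_eq_True)
  from sum.not_neutral_contains_not_neutral[OF this]
  obtain z where "z \<in> nbrs E x" "(if z = v0 \<and> 0 < k then 0 else taboo_prob E v0 k z / real (deg E z)) \<noteq> 0"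
    by blast
  then have "z \<in> nbrs E x" "taboo_prob E v0 k z \<noteq> 0" by (auto split: if_splits)
  with Suc.IH[of z] sym show ?case by (auto simp: nbrs_def)
qed

lemma swap_sum:
  fixes g :: "'v \<Rightarrow> real"
  assumes A: "finite A" and S: "finite S" and gS: "\<And>z. g z \<noteq> 0 \<Longrightarrow> z \<in> S"
    and SA: "\<And>z. z \<in> S \<Longrightarrow> nbrs E z \<subseteq> A"
  shows "(\<Sum>y\<in>A. \<Sum>z\<in>nbrs E y. g z / real (deg E z)) = (\<Sum>z\<in>S. g z)"
proof -
  have "(\<Sum>y\<in>A. \<Sum>z\<in>nbrs E y. g z / real (deg E z))
      = (\<Sum>y\<in>A. \<Sum>z\<in>S. if E z y then g z / real (deg E z) else 0)"
  proof (rule sum.cong[OF refl])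
    fix y assume "y \<in> A"
    have "(\<Sum>z\<in>nbrs E y. g z / real (deg E z)) = (\<Sum>z\<in>nbrs E y \<inter> S. g z / real (deg E z))"
      by (rule sum.mono_neutral_right) (use lf gS in auto)
    also have "\<dots> = (\<Sum>z\<in>S. if E z y then g z / real (deg E z) else 0)"
      using S sym by (simp add: sum.If_cases nbrs_def Int_commute Collect_conj_eq) (metis (no_types, lifting) Collect_cong Collect_mem_eq sym)
    finally show "(\<Sum>z\<in>nbrs E y. g z / real (deg E z)) = (\<Sum>z\<in>S. if E z y then g z / real (deg E z) else 0)" .
  qed
  also have "\<dots> = (\<Sum>z\<in>S. \<Sum>y\<in>A. if E z y then g z / real (deg E z) else 0)"
    by (rule sum.swap)
  also have "\<dots> = (\<Sum>z\<in>S. g z)"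
  proof (rule sum.cong[OF refl])
    fix z assume z: "z \<in> S"
    have "(\<Sum>y\<in>A. if E z y then g z / real (deg E z) else 0) = real (card {y\<in>A. E z y}) * (g z / real (deg E z))"
      using A by (simp add: sum.If_cases Int_def)
    also have "{y\<in>A. E z y} = nbrs E z" using SA[OF z] by (auto simp: nbrs_def)
    finally show "(\<Sum>y\<in>A. if E z y then g z / real (deg E z) else 0) = g z"
      using degpos[of z] by (simp add: deg_def)
  qed
  finally show ?thesis .
qed

definition M where "M k = (\<Sum>x\<in>B k. taboo_prob E v0 k x)"

lemma M_Suc: "M (Suc k) = M k - (if 0 < k then taboo_prob E v0 k v0 else 0)"
proof -
  define g where "g z = (if z = v0 \<and> 0 < k then 0 else taboo_prob E v0 k z)" for z
  have "M (Suc k) = (\<Sum>y\<in>B (Suc k). \<Sum>z\<in>nbrs E y. g z / real (deg E z))"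
    unfolding M_def tp_Suc g_def by (intro sum.cong) auto
  also have "\<dots> = (\<Sum>z\<in>B k. g z)"
    by (rule swap_sum) (use B_finite tp_supp lf in \<open>auto simp: g_def split: if_splits\<close>)
  also have "\<dots> = M k - (if 0 < k then taboo_prob E v0 k v0 else 0)"
    using B_finite[of k] v0_B[of k] unfolding M_def g_def
    by (auto simp: sum.If_cases Diff_eq[symmetric] sum_diff1)
  finally show ?thesis .
qed

lemma M_nonneg: "0 \<le> M k"
  unfolding M_def by (auto intro!: sum_nonneg tp_nonneg)

lemma M_formula: "M (Suc K) = 1 - (\<Sum>k<K. taboo_prob E v0 (Suc k) v0)"
proof (induction K)
  case 0 show ?case using M_Suc[of 0] by (simp add: M_def)
next
  case (Suc K) then show ?case using M_Suc[of "Suc K"] by simp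
qed

lemma ret_summable: "summable (\<lambda>k. taboo_prob E v0 (Suc k) v0)"
proof (rule summableI_nonneg_bounded)
  show "0 \<le> taboo_prob E v0 (Suc k) v0" for k by (rule tp_nonneg)
  show "(\<Sum>k<K. taboo_prob E v0 (Suc k) v0) \<le> 1" for K
    using M_formula[of K] M_nonneg[of "Suc K"] by simp
qed

lemma sum_if_c:
  fixes a :: "'v \<Rightarrow> real"
  assumes "finite N"
  shows "(\<Sum>z\<in>N. if z = c then 0 else a z) = (\<Sum>z\<in>N. a z) - (if c \<in> N then a c else 0)"
proof (cases "c \<in> N")
  case True
  then show ?thesis using assms
    by (simp add: sum.remove[of N c] sum.remove[of N c a])
next
  case False
  then show ?thesis by (auto intro!: sum.cong)
qed

lemma p1: "walk_prob E v0 (Suc 0) y = (if v0 \<in> nbrs E y then 1 / real (deg E v0) else 0)"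
proof -
  have "walk_prob E v0 (Suc 0) y = (\<Sum>z\<in>nbrs E y. if z = v0 then 1 / real (deg E v0) else 0)"
    unfolding wp_Suc by (rule sum.cong) auto
  then show ?thesis using lf[of y] by (simp add: sum.delta)
qed

lemma renewal:
  "walk_prob E v0 (Suc k) y = taboo_prob E v0 (Suc k) y +
     (\<Sum>j<k. taboo_prob E v0 (Suc j) v0 * walk_prob E v0 (k - j) y)"
proof (induction k arbitrary: y)
  case 0
  show ?case by (simp add: wp_Suc tp_Suc)
next
  case (Suc k)
  let ?p = "walk_prob E v0" and ?f = "\<lambda>j. taboo_prob E v0 j v0"
  have "?p (Suc (Suc k)) y = (\<Sum>z\<in>nbrs E y. ?p (Suc k) z / real (deg E z))"
    by (rule wp_Suc)
  also have "\<dots> = (\<Sum>z\<in>nbrs E y. taboo_prob E v0 (Suc k) z / real (deg E z)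
        + (\<Sum>j<k. ?f (Suc j) * (?p (k - j) z / real (deg E z))))"
    by (intro sum.cong refl) (simp add: Suc.IH add_divide_distrib sum_divide_distrib)
  also have "\<dots> = (\<Sum>z\<in>nbrs E y. taboo_prob E v0 (Suc k) z / real (deg E z))
        + (\<Sum>j<k. ?f (Suc j) * ?p (Suc (k - j)) y)"
    by (simp add: sum.distrib sum.swap[of _ _ "nbrs E y"] sum_distrib_left wp_Suc)
  also have "(\<Sum>z\<in>nbrs E y. taboo_prob E v0 (Suc k) z / real (deg E z))
      = taboo_prob E v0 (Suc (Suc k)) y + ?f (Suc k) * ?p (Suc 0) y"
    using sum_if_c[OF lf[of y], of v0 "\<lambda>z. taboo_prob E v0 (Suc k) z / real (deg E z)"]
    by (simp add: tp_Suc[of "Suc k"] p1)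
  finally show ?case
    by (simp add: Suc_diff_le)
qed

definition r where "r = return_prob E v0"

lemma r_eq: "r = (\<Sum>k. taboo_prob E v0 (Suc k) v0)"
  by (simp add: r_def return_prob_def)

lemma r_nonneg: "0 \<le> r"
  unfolding r_eq by (rule suminf_nonneg[OF ret_summable tp_nonneg])

lemma f_partial: "(\<Sum>j<K. taboo_prob E v0 (Suc j) v0) \<le> r"
  unfolding r_eq by (rule sum_le_suminf[OF ret_summable]) (auto intro: tp_nonneg)

lemma pv0: "walk_prob E v0 (Suc k) v0 = (\<Sum>j<Suc k. taboo_prob E v0 (Suc j) v0 * walk_prob E v0 (k - j) v0)"
  using renewal[of k v0] by simp

lemma S_rec: "(\<Sum>k<Suc K. walk_prob E v0 k v0) \<le> 1 + r * (\<Sum>k<K. walk_prob E v0 k v0)"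
proof -
  let ?p = "\<lambda>k. walk_prob E v0 k v0" and ?f = "\<lambda>j. taboo_prob E v0 (Suc j) v0"
  let ?S = "\<Sum>k<K. ?p k"
  have "(\<Sum>k<Suc K. ?p k) = 1 + (\<Sum>k<K. ?p (Suc k))"
    by (subst sum.lessThan_Suc_shift) simp
  also have "(\<Sum>k<K. ?p (Suc k)) = (\<Sum>k<K. \<Sum>j<K. if j \<le> k then ?f j * ?p (k - j) else 0)"
  proof (intro sum.cong refl)
    fix k assume k: "k \<in> {..<K}"
    have "(\<Sum>j<K. if j \<le> k then ?f j * ?p (k - j) else 0) = (\<Sum>j\<in>{..<K} \<inter> {j. j \<le> k}. ?f j * ?p (k - j))"
      by (simp add: sum.If_cases)
    also have "{..<K} \<inter> {j. j \<le> k} = {..<Suc k}" using k by auto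
    finally show "?p (Suc k) = (\<Sum>j<K. if j \<le> k then ?f j * ?p (k - j) else 0)"
      using pv0[of k] by simp
  qed
  also have "\<dots> = (\<Sum>j<K. ?f j * (\<Sum>k<K. if j \<le> k then ?p (k - j) else 0))"
    by (subst sum.swap) (simp add: sum_distrib_left if_distrib cong: if_cong)
  also have "\<dots> \<le> (\<Sum>j<K. ?f j * ?S)"
  proof (rule sum_mono)
    fix j assume j: "j \<in> {..<K}"
    have "(\<Sum>k<K. if j \<le> k then ?p (k - j) else 0) = (\<Sum>k\<in>{j..<K}. ?p (k - j))"
      by (simp add: sum.If_cases) (intro sum.cong, auto)
    also have "\<dots> = (\<Sum>i\<in>(\<lambda>k. k - j) ` {j..<K}. ?p i)"
      by (subst sum.reindex) (auto simp: inj_on_def)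
    also have "\<dots> \<le> ?S"
      by (rule sum_mono2) (auto intro: wp_nonneg)
    finally show "?f j * (\<Sum>k<K. if j \<le> k then ?p (k - j) else 0) \<le> ?f j * ?S"
      by (rule mult_left_mono[OF _ tp_nonneg])
  qed
  also have "\<dots> = (\<Sum>j<K. ?f j) * ?S" by (simp add: sum_distrib_right)
  also have "\<dots> \<le> r * ?S"
    by (rule mult_right_mono[OF f_partial]) (auto intro: sum_nonneg wp_nonneg)
  finally show ?thesis by simp
qed

lemma S_bound:
  assumes tr: "r < 1"
  shows "(\<Sum>k<K. walk_prob E v0 k v0) \<le> 1 / (1 - r)"
proof -
  let ?S = "\<lambda>K. \<Sum>k<K. walk_prob E v0 k v0"
  have mono: "?S K \<le> ?S (Suc K)" by (simp add: wp_nonneg)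
  have "?S (Suc K) \<le> 1 + r * ?S (Suc K)"
    using S_rec[of K] mult_left_mono[OF mono r_nonneg] by linarith
  then have "?S (Suc K) * (1 - r) \<le> 1" by (simp add: algebra_simps)
  then have "?S (Suc K) \<le> 1 / (1 - r)" using tr by (simp add: field_simps)
  then show ?thesis using mono by linarith
qed

end

locale grw2 = grw +
  assumes tr: "return_prob E v0 < 1"
    and conn: "\<And>x. (v0, x) \<in> {(a, b). E a b}\<^sup>*"
begin

lemma r_lt: "r < 1" using tr by (simp add: r_def)

lemma summ_v0: "summable (\<lambda>k. walk_prob E v0 k v0)"
  by (rule summableI_nonneg_bounded[OF wp_nonneg S_bound[OF r_lt]])

lemma green_v0_le: "green E v0 v0 \<le> 1 / (1 - r)"
  unfolding green_def by (rule suminf_le_const[OF summ_v0 S_bound[OF r_lt]])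

lemma green_v0_ge: "1 \<le> green E v0 v0"
  unfolding green_def using sum_le_suminf[OF summ_v0, of "{..<1}"] wp_nonneg by simp

lemma summ_nb:
  assumes sy: "summable (\<lambda>k. walk_prob E v0 k y)" and zy: "E z y"
  shows "summable (\<lambda>k. walk_prob E v0 k z)"
proof (rule summableI_nonneg_bounded[OF wp_nonneg])
  fix K
  have le: "walk_prob E v0 k z \<le> real (deg E z) * walk_prob E v0 (Suc k) y" for k
  proof -
    have "walk_prob E v0 k z / real (deg E z) \<le> walk_prob E v0 (Suc k) y"
      unfolding wp_Suc
      by (rule member_le_sum) (use zy sym lf in \<open>auto simp: nbrs_def intro!: divide_nonneg_nonneg wp_nonneg\<close>)
    then show ?thesis using degpos[of z] by (simp add: field_simps)
  qed
  have "(\<Sum>k<K. walk_prob E v0 k z) \<le> (\<Sum>k<K. real (deg E z) * walk_prob E v0 (Suc k) y)"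
    by (rule sum_mono) (rule le)
  also have "\<dots> = real (deg E z) * (\<Sum>k<K. walk_prob E v0 (Suc k) y)"
    by (simp add: sum_distrib_left)
  also have "(\<Sum>k<K. walk_prob E v0 (Suc k) y) \<le> (\<Sum>k<Suc K. walk_prob E v0 k y)"
    by (subst sum.lessThan_Suc_shift) (simp add: wp_nonneg)
  also have "\<dots> \<le> green E v0 y"
    unfolding green_def by (rule sum_le_suminf[OF sy]) (auto intro: wp_nonneg)
  finally show "(\<Sum>k<K. walk_prob E v0 k z) \<le> real (deg E z) * green E v0 y"
    by (simp add: mult_left_mono)
qed

lemma summ_all: "summable (\<lambda>k. walk_prob E v0 k x)"
  using conn[of x]
proof (induction rule: rtrancl_induct)
  case base then show ?case by (rule summ_v0)
next
  case (step y x)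
  then show ?case using summ_nb[of y x] sym by auto
qed

lemma green_nonneg: "0 \<le> green E v0 x"
  unfolding green_def by (rule suminf_nonneg[OF summ_all wp_nonneg])

lemma harmonic:
  "green E v0 y = (if y = v0 then 1 else 0) + (\<Sum>z\<in>nbrs E y. green E v0 z / real (deg E z))"
proof -
  have "green E v0 y = walk_prob E v0 0 y + (\<Sum>k. walk_prob E v0 (Suc k) y)"
    unfolding green_def using suminf_split_head[OF summ_all[of y]] by simp
  also have "(\<Sum>k. walk_prob E v0 (Suc k) y) = (\<Sum>k. \<Sum>z\<in>nbrs E y. walk_prob E v0 k z / real (deg E z))"
    by (simp add: wp_Suc)
  also have "\<dots> = (\<Sum>z\<in>nbrs E y. \<Sum>k. walk_prob E v0 k z / real (deg E z))"
    by (rule suminf_sum) (intro summable_divide summ_all)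
  also have "\<dots> = (\<Sum>z\<in>nbrs E y. green E v0 z / real (deg E z))"
    unfolding green_def by (intro sum.cong refl suminf_divide summ_all)
  finally show ?thesis by simp
qed

end

lemma orbit:
  fixes f :: "'a \<Rightarrow> 'a"
  assumes bij: "bij_betw f N N" and fin: "finite N" and y: "y \<in> N"
    and orb: "\<forall>z\<in>N. \<exists>k. (f^^k) y = z"
  shows "(f ^^ card N) y = y \<and> inj_on (\<lambda>i. (f^^i) y) {..<card N} \<and> (\<lambda>i. (f^^i) y) ` {..<card N} = N"
proof -
  define g where "g k = (f^^k) y" for k
  have mem: "g k \<in> N" for k
    unfolding g_def using bij_betw_apply[OF bij_betw_funpow[OF bij] y] .
  have img_sub: "g ` A \<subseteq> N" for A using mem by auto
  have "card (g ` {..card N}) \<le> card N" by (rule card_mono[OF fin img_sub])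
  then have "card {..card N} > card (g ` {..card N})" by simp
  then have "\<not> inj_on g {..card N}" by (rule pigeonhole)
  then obtain a b where ab: "a \<le> card N" "b \<le> card N" "a \<noteq> b" "g a = g b"
    unfolding inj_on_def by auto
  have "\<exists>a b. a < b \<and> b \<le> card N \<and> g a = g b"
  proof (cases "a < b")
    case True then show ?thesis using ab by blast
  next
    case False then show ?thesis using ab by (intro exI[of _ b] exI[of _ a]) auto
  qed
  then obtain a b where ab: "a < b" "b \<le> card N" "g a = g b" by blast
  have "(f^^a) (g (b - a)) = g b"
    unfolding g_def by (metis ab(1) comp_apply funpow_add le_add_diff_inverse less_imp_le_nat)
  then have "(f^^a) (g (b - a)) = (f^^a) y" using ab(3) by (simp add: g_def)
  then have q0: "g (b - a) = y"
    using bij_betw_imp_inj_on[OF bij_betw_funpow[OF bij, of a]] mem y by (meson inj_onD)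
  define p where "p = (LEAST q. 0 < q \<and> g q = y)"
  have Pp: "0 < p \<and> g p = y"
    unfolding p_def by (rule LeastI[of _ "b - a"]) (use q0 ab in auto)
  have p_le: "p \<le> card N"
    using Least_le[of "\<lambda>q. 0 < q \<and> g q = y" "b - a"] q0 ab unfolding p_def by auto
  have Nsub: "N \<subseteq> g ` {..<p}"
  proof
    fix z assume "z \<in> N"
    then obtain k where "(f^^k) y = z" using orb by blast
    then have "g (k mod p) = z" using funpow_mod_eq[where f=f and n=p and x=y and m=k] Pp by (simp add: g_def)
    moreover have "k mod p < p" using Pp by simp
    ultimately show "z \<in> g ` {..<p}" by blast
  qed
  have "card N \<le> card (g ` {..<p})" by (rule card_mono[OF _ Nsub]) simp
  also have "\<dots> \<le> p" using card_image_le[of "{..<p}" g] by simp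
  finally have pN: "p = card N" using p_le by simp
  have img: "g ` {..<card N} = N" using Nsub img_sub pN by blast
  have "inj_on g {..<card N}" by (rule eq_card_imp_inj_on) (use img in simp_all)
  then show ?thesis using Pp pN img unfolding g_def by simp
qed

lemma tele:
  fixes a :: "nat \<Rightarrow> real"
  shows "(\<Sum>i<d. real i * a (Suc (Suc i))) =
     (\<Sum>i<d. real i * a (Suc i)) + real d * a (Suc d) - (\<Sum>i<d. a (Suc i)) + a 1 - a (Suc d)"
  by (induction d) (simp_all add: algebra_simps)

lemma shift_sum:
  fixes a :: "nat \<Rightarrow> real"
  assumes "a d = a 0"
  shows "(\<Sum>i<d. a (Suc i)) = (\<Sum>i<d. a i)"
proof -
  have "a 0 + (\<Sum>i<d. a (Suc i)) = (\<Sum>i<Suc d. a i)" by (subst sum.lessThan_Suc_shift) simp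
  also have "\<dots> = (\<Sum>i<d. a i) + a d" by simp
  finally show ?thesis using assms by simp
qed

locale grw3 = grw2 E v0 for E :: "'v \<Rightarrow> 'v \<Rightarrow> bool" and v0 +
  fixes m :: "'v \<Rightarrow> 'v \<Rightarrow> 'v"
  assumes rm: "rotor_mechanism E m"
begin

definition h where "h z = green E v0 z / real (deg E z)"

lemma h_nonneg: "0 \<le> h z" unfolding h_def by (simp add: green_nonneg)

lemma m_bij: "bij_betw (m x) (nbrs E x) (nbrs E x)"
  using rm by (simp add: rotor_mechanism_def)

lemma m_mem: "y \<in> nbrs E x \<Longrightarrow> m x y \<in> nbrs E x"
  using m_bij bij_betw_apply by metis

lemma orb_x:
  assumes "y \<in> nbrs E x"
  shows "(m x ^^ deg E x) y = y \<and> inj_on (\<lambda>i. (m x^^i) y) {..<deg E x} \<and> (\<lambda>i. (m x^^i) y) ` {..<deg E x} = nbrs E x"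
  unfolding deg_def by (rule orbit[OF m_bij lf assms]) (use rm assms in \<open>auto simp: rotor_mechanism_def\<close>)

lemma sumN:
  assumes y: "y \<in> nbrs E x"
  shows "(\<Sum>i<deg E x. h ((m x ^^ Suc i) y)) = (\<Sum>z\<in>nbrs E x. h z)"
proof -
  note o = orb_x[OF y]
  have "(\<Sum>i<deg E x. h ((m x ^^ Suc i) y)) = (\<Sum>i<deg E x. h ((m x ^^ i) y))"
    by (rule shift_sum[where a = "\<lambda>i. h ((m x ^^ i) y)"]) (use o in simp)
  also have "\<dots> = (\<Sum>z\<in>(\<lambda>i. (m x^^i) y) ` {..<deg E x}. h z)"
    by (subst sum.reindex) (use o in auto)
  finally show ?thesis using o by simp
qed

lemma weight_step:
  assumes y: "y \<in> nbrs E x"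
  shows "weight E v0 m x (m x y) - weight E v0 m x y
     = h x - h (m x y) - (if x = v0 then 1 / real (deg E v0) else 0)"
proof -
  note o = orb_x[OF y]
  define d where "d = deg E x"
  define a where "a k = h ((m x ^^ k) y)" for k
  have dpos: "0 < real d" using degpos by (simp add: d_def)
  have w1: "weight E v0 m x y = (-1 / real d) * (\<Sum>i<d. real i * a (Suc i))"
    unfolding weight_def a_def d_def h_def by simp
  have w2: "weight E v0 m x (m x y) = (-1 / real d) * (\<Sum>i<d. real i * a (Suc (Suc i)))"
    unfolding weight_def a_def d_def h_def by (simp add: funpow_Suc_right del: funpow.simps)
  have ad: "a (Suc d) = a 1"
    unfolding a_def d_def using o by (simp add: funpow_swap1)
  have sa: "(\<Sum>i<d. a (Suc i)) = real d * h x - (if x = v0 then 1 else 0)"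
  proof -
    have "(\<Sum>i<d. a (Suc i)) = (\<Sum>z\<in>nbrs E x. h z)" unfolding a_def d_def by (rule sumN[OF y])
    also have "\<dots> = green E v0 x - (if x = v0 then 1 else 0)"
      using harmonic[of x] by (simp add: h_def)
    also have "green E v0 x = real d * h x" using dpos by (simp add: h_def d_def)
    finally show ?thesis .
  qed
  have a1: "a 1 = h (m x y)" by (simp add: a_def)
  show ?thesis
    unfolding w1 w2 tele ad sa a1 using dpos degpos[of v0]
    by (simp add: field_simps d_def)
qed

end




definition st where "st m v0 \<rho> n s = rotor_hist m v0 \<rho> n s ! s"

lemma hist_app: "\<exists>e. rotor_hist m v0 \<rho> n (Suc t) = rotor_hist m v0 \<rho> n t @ [e]"
  by (simp only: rotor_hist.simps Let_def) blast

lemma hist_len: "length (rotor_hist m v0 \<rho> n t) = Suc t"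
proof (induction t)
  case 0 then show ?case by simp
next
  case (Suc t)
  obtain e where "rotor_hist m v0 \<rho> n (Suc t) = rotor_hist m v0 \<rho> n t @ [e]" using hist_app[of m v0 \<rho> n t] by blast
  then show ?case using Suc by simp
qed

lemma hist_nth: "s \<le> t \<Longrightarrow> rotor_hist m v0 \<rho> n t ! s = st m v0 \<rho> n s"
proof (induction t)
  case 0 then show ?case by (simp add: st_def)
next
  case (Suc t)
  show ?case
  proof (cases "s = Suc t")
    case True then show ?thesis by (simp add: st_def)
  next
    case False
    then have "s \<le> t" using Suc.prems by simp
    obtain e where "rotor_hist m v0 \<rho> n (Suc t) = rotor_hist m v0 \<rho> n t @ [e]" using hist_app[of m v0 \<rho> n t] by blast
    then show ?thesis using Suc.IH \<open>s \<le> t\<close> hist_len[of m v0 \<rho> n t]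
      by (simp add: nth_append)
  qed
qed

lemma st_0: "st m v0 \<rho> n 0 = (\<rho>, \<lambda>i. v0)"
  by (simp add: st_def)

definition step_of where
  "step_of m v0 n s H = (let r = fst (H s); X = snd (H s); i = Suc s mod n
    in if X i = v0 \<and> (\<exists>s'<s. snd (H s') i \<noteq> v0) then (r, X)
       else (let x = X i; r' = r(x := m x (r x)) in (r', X(i := r' x))))"

lemma hist_Suc: "rotor_hist m v0 \<rho> n (Suc s) = rotor_hist m v0 \<rho> n s @ [step_of m v0 n s (\<lambda>j. rotor_hist m v0 \<rho> n s ! j)]"
  unfolding rotor_hist.simps(2) step_of_def Let_def by (rule refl)

lemma step_of_cong: "(\<And>j. j \<le> s \<Longrightarrow> H j = H' j) \<Longrightarrow> step_of m v0 n s H = step_of m v0 n s H'"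
proof -
  assume a: "\<And>j. j \<le> s \<Longrightarrow> H j = H' j"
  have 1: "H s = H' s" using a by simp
  have 2: "(\<exists>s'<s. snd (H s') i \<noteq> v0) = (\<exists>s'<s. snd (H' s') i \<noteq> v0)" for i
    using a by (metis less_imp_le_nat)
  show ?thesis unfolding step_of_def 1 2 by (rule refl)
qed

lemma st_Suc': "st m v0 \<rho> n (Suc s) = step_of m v0 n s (st m v0 \<rho> n)"
proof -
  have "st m v0 \<rho> n (Suc s) = step_of m v0 n s (\<lambda>j. rotor_hist m v0 \<rho> n s ! j)"
    unfolding st_def[of m v0 \<rho> n "Suc s"] hist_Suc using hist_len[of m v0 \<rho> n s]
    by (simp add: nth_append)
  also have "\<dots> = step_of m v0 n s (st m v0 \<rho> n)"
    by (rule step_of_cong) (simp add: hist_nth)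
  finally show ?thesis .
qed

lemma sum_upd:
  fixes \<phi> :: "'a \<Rightarrow> 'b \<Rightarrow> real"
  assumes "finite A" "i \<in> A"
  shows "(\<Sum>j\<in>A. \<phi> j ((f(i := v)) j)) = (\<Sum>j\<in>A. \<phi> j (f j)) - \<phi> i (f i) + \<phi> i v"
proof -
  have "(\<Sum>j\<in>A. \<phi> j ((f(i := v)) j)) = \<phi> i v + (\<Sum>j\<in>A - {i}. \<phi> j ((f(i := v)) j))"
    using assms by (simp add: sum.remove)
  also have "(\<Sum>j\<in>A - {i}. \<phi> j ((f(i := v)) j)) = (\<Sum>j\<in>A - {i}. \<phi> j (f j))"
    by (rule sum.cong) auto
  also have "\<dots> = (\<Sum>j\<in>A. \<phi> j (f j)) - \<phi> i (f i)"
    using assms by (simp add: sum.remove)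
  finally show ?thesis by simp
qed

context grw3
begin

abbreviation X where "X \<rho> n s \<equiv> snd (st m v0 \<rho> n s)"
abbreviation R where "R \<rho> n s \<equiv> fst (st m v0 \<rho> n s)"
definition frozen where "frozen \<rho> n s \<longleftrightarrow> X \<rho> n s (Suc s mod n) = v0 \<and> (\<exists>s'<s. X \<rho> n s' (Suc s mod n) \<noteq> v0)"

lemma st_frozen: "frozen \<rho> n s \<Longrightarrow> st m v0 \<rho> n (Suc s) = st m v0 \<rho> n s"
  unfolding st_Suc' step_of_def frozen_def Let_def by simp

lemma st_move:
  assumes "\<not> frozen \<rho> n s"
  defines "i \<equiv> Suc s mod n"
  defines "x \<equiv> X \<rho> n s i"
  shows "R \<rho> n (Suc s) = (R \<rho> n s)(x := m x (R \<rho> n s x))"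
    and "X \<rho> n (Suc s) = (X \<rho> n s)(i := m x (R \<rho> n s x))"
  using assms unfolding st_Suc' step_of_def frozen_def Let_def by (auto simp: i_def x_def)

lemma R_mem:
  assumes rc: "\<And>x. \<rho> x \<in> nbrs E x"
  shows "R \<rho> n s x \<in> nbrs E x"
proof (induction s arbitrary: x)
  case 0 then show ?case using rc by (simp add: st_0)
next
  case (Suc s)
  show ?case
  proof (cases "frozen \<rho> n s")
    case True then show ?thesis using Suc by (simp add: st_frozen)
  next
    case False
    then show ?thesis using Suc m_mem by (simp add: st_move)
  qed
qed

definition cnt where "cnt \<rho> n s = (\<Sum>s'<s. if \<not> frozen \<rho> n s' \<and> X \<rho> n s' (Suc s' mod n) = v0 then 1 else 0 :: real)"

lemma inv:
  assumes rc: "\<And>x. \<rho> x \<in> nbrs E x" and fin: "finite F"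
    and FS: "\<And>s'. s' < s \<Longrightarrow> X \<rho> n s' (Suc s' mod n) \<in> F" and npos: "0 < n"
  shows "(\<Sum>i<n. h (X \<rho> n s i)) + (\<Sum>x\<in>F. weight E v0 m x (R \<rho> n s x) - weight E v0 m x (\<rho> x))
     + cnt \<rho> n s / real (deg E v0) = real n * h v0"
  using FS
proof (induction s)
  case 0 then show ?case by (simp add: st_0 cnt_def)
next
  case (Suc s)
  have IH: "(\<Sum>i<n. h (X \<rho> n s i)) + (\<Sum>x\<in>F. weight E v0 m x (R \<rho> n s x) - weight E v0 m x (\<rho> x))
     + cnt \<rho> n s / real (deg E v0) = real n * h v0"
    using Suc by simp
  show ?case
  proof (cases "frozen \<rho> n s")
    case True
    then show ?thesis using IH by (simp add: st_frozen cnt_def)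
  next
    case False
    define i where "i = Suc s mod n"
    define x where "x = X \<rho> n s i"
    define y where "y = R \<rho> n s x"
    have i: "i < n" using npos by (simp add: i_def)
    have xF: "x \<in> F" using Suc.prems[of s] by (simp add: x_def i_def)
    have y: "y \<in> nbrs E x" unfolding y_def by (rule R_mem[OF rc])
    have R': "R \<rho> n (Suc s) = (R \<rho> n s)(x := m x y)"
      using st_move(1)[OF False] by (simp add: x_def i_def y_def)
    have X': "X \<rho> n (Suc s) = (X \<rho> n s)(i := m x y)"
      using st_move(2)[OF False] by (simp add: x_def i_def y_def)
    have c': "cnt \<rho> n (Suc s) = cnt \<rho> n s + (if x = v0 then 1 else 0)"
      using False by (simp add: cnt_def x_def i_def)
    have s1: "(\<Sum>j<n. h (X \<rho> n (Suc s) j)) = (\<Sum>j<n. h (X \<rho> n s j)) - h x + h (m x y)"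
      unfolding X' using sum_upd[of "{..<n}" i "\<lambda>j v. h v" "X \<rho> n s" "m x y"] i
      by (simp add: x_def)
    have s2: "(\<Sum>z\<in>F. weight E v0 m z (R \<rho> n (Suc s) z) - weight E v0 m z (\<rho> z))
       = (\<Sum>z\<in>F. weight E v0 m z (R \<rho> n s z) - weight E v0 m z (\<rho> z))
         - weight E v0 m x y + weight E v0 m x (m x y)"
      unfolding R' using sum_upd[of F x "\<lambda>z v. weight E v0 m z v - weight E v0 m z (\<rho> z)" "R \<rho> n s" "m x y"] fin xF
      by (simp add: y_def)
    have ws: "weight E v0 m x (m x y) - weight E v0 m x y = h x - h (m x y) - (if x = v0 then 1 / real (deg E v0) else 0)"
      by (rule weight_step[OF y])
    show ?thesis unfolding s1 s2 c'
    proof (cases "x = v0")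
      case True
      then show "(\<Sum>i<n. h (X \<rho> n s i)) - h x + h (m x y) +
       ((\<Sum>z\<in>F. weight E v0 m z (R \<rho> n s z) - weight E v0 m z (\<rho> z)) - weight E v0 m x y + weight E v0 m x (m x y)) +
       (cnt \<rho> n s + (if x = v0 then 1 else 0)) / real (deg E v0) = real n * h v0"
        using IH ws by (simp add: add_divide_distrib)
    next
      case False
      then show "(\<Sum>i<n. h (X \<rho> n s i)) - h x + h (m x y) +
       ((\<Sum>z\<in>F. weight E v0 m z (R \<rho> n s z) - weight E v0 m z (\<rho> z)) - weight E v0 m x y + weight E v0 m x (m x y)) +
       (cnt \<rho> n s + (if x = v0 then 1 else 0)) / real (deg E v0) = real n * h v0"
        using IH ws by simp
    qed
  qed
qed


lemma unmoved: "(\<And>s'. s' < s \<Longrightarrow> Suc s' mod n \<noteq> i) \<Longrightarrow> X \<rho> n s i = v0"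
proof (induction s)
  case 0 then show ?case by (simp add: st_0)
next
  case (Suc s)
  have "X \<rho> n s i = v0" using Suc by simp
  moreover have "Suc s mod n \<noteq> i" using Suc.prems by simp
  ultimately show ?case
    by (cases "frozen \<rho> n s") (simp_all add: st_frozen st_move)
qed

lemma mod_ne: "(a::nat) < b \<Longrightarrow> b < n \<Longrightarrow> Suc a mod n \<noteq> Suc b mod n"
proof -
  assume ab: "a < b" "b < n"
  then have "Suc a mod n = Suc a" by simp
  moreover have "Suc b mod n = (if Suc b = n then 0 else Suc b)" using ab by auto
  ultimately show ?thesis using ab by auto
qed

lemma cnt_ge:
  assumes "n \<le> t"
  shows "real n \<le> cnt \<rho> n t"
proof -
  have ind: "(if \<not> frozen \<rho> n s' \<and> X \<rho> n s' (Suc s' mod n) = v0 then 1 else 0 :: real) = 1" if s': "s' < n" for s'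
  proof -
    have u: "X \<rho> n s'' (Suc s' mod n) = v0" if "s'' \<le> s'" for s''
      by (rule unmoved) (use mod_ne s' that in \<open>metis order_less_le_trans\<close>)
    then have "\<not> frozen \<rho> n s'" unfolding frozen_def by auto
    then show ?thesis using u[of s'] by simp
  qed
  have "real n = (\<Sum>s'<n. (if \<not> frozen \<rho> n s' \<and> X \<rho> n s' (Suc s' mod n) = v0 then 1 else 0 :: real))"
    using ind by simp
  also have "\<dots> \<le> cnt \<rho> n t" unfolding cnt_def
    by (rule sum_mono2) (use assms in auto)
  finally show ?thesis .
qed

end

theorem proposition2p2:
  fixes E :: "'v \<Rightarrow> 'v \<Rightarrow> bool" and v0 :: 'v and m :: "'v \<Rightarrow> 'v \<Rightarrow> 'v"
    and \<rho>min :: "'v \<Rightarrow> 'v" and n t :: nat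
  assumes "simple_graph E" and "locally_finite E" and "connected_graph E"
    and "transient E v0"
    and "rotor_mechanism E m"
    and "rotor_config E \<rho>min"
    and "\<forall>x. \<forall>y\<in>nbrs E x. weight E v0 m x (\<rho>min x) \<le> weight E v0 m x y"
    and "1 \<le> n" and "n \<le> t"
  shows "real (I_count m v0 \<rho>min n t) / real n \<ge> escape_prob E v0"
proof -
  interpret grw3 E v0 m
  proof
    show "E x y \<Longrightarrow> E y x" for x y using assms(1) by (simp add: simple_graph_def)
    show "finite (nbrs E x)" for x using assms(2) by (simp add: locally_finite_def)
    show "nbrs E x \<noteq> {}" for x using assms(5) by (simp add: rotor_mechanism_def)
    show "return_prob E v0 < 1" using assms(4) by (simp add: transient_def)
    show "(v0, x) \<in> {(a, b). E a b}\<^sup>*" for x using assms(3) by (simp add: connected_graph_def)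
    show "rotor_mechanism E m" by (rule assms(5))
  qed
  have rc: "\<And>x. \<rho>min x \<in> nbrs E x" using assms(6) by (simp add: rotor_config_def)
  define F where "F = (\<lambda>s'. X \<rho>min n s' (Suc s' mod n)) ` {..<t}"
  have finF: "finite F" by (simp add: F_def)
  have npos: "0 < n" using assms(8) by simp
  have I: "(\<Sum>i<n. h (X \<rho>min n t i)) + (\<Sum>x\<in>F. weight E v0 m x (R \<rho>min n t x) - weight E v0 m x (\<rho>min x))
     + cnt \<rho>min n t / real (deg E v0) = real n * h v0"
    by (rule inv[OF rc finF _ npos]) (auto simp: F_def)
  have W: "0 \<le> (\<Sum>x\<in>F. weight E v0 m x (R \<rho>min n t x) - weight E v0 m x (\<rho>min x))"
    using assms(7) R_mem[OF rc] by (auto intro!: sum_nonneg)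
  have C: "real n \<le> cnt \<rho>min n t" by (rule cnt_ge[OF assms(9)])
  define Ret where "Ret = {i. i < n \<and> returned m v0 \<rho>min n t i}"
  define NR where "NR = {i. i < n \<and> \<not> returned m v0 \<rho>min n t i}"
  have posX: "pos m v0 \<rho>min n t i = X \<rho>min n t i" for i by (simp add: pos_def st_def)
  have card: "card Ret + card NR = n"
  proof -
    have "card Ret + card NR = card (Ret \<union> NR)"
      by (rule card_Un_disjoint[symmetric]) (auto simp: Ret_def NR_def)
    also have "Ret \<union> NR = {..<n}" by (auto simp: Ret_def NR_def)
    finally show ?thesis by simp
  qed
  have "real (card Ret) * h v0 = (\<Sum>i\<in>Ret. h (X \<rho>min n t i))"
    by (simp add: Ret_def returned_def posX)
  also have "\<dots> \<le> (\<Sum>i<n. h (X \<rho>min n t i))"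
    by (rule sum_mono2) (auto simp: Ret_def h_nonneg)
  finally have S: "real (card Ret) * h v0 \<le> (\<Sum>i<n. h (X \<rho>min n t i))" .
  have d0: "0 < real (deg E v0)" using degpos by simp
  have "real (card Ret) * h v0 + real n / real (deg E v0) \<le> real n * h v0"
    using I W C S d0 by (smt (verit) divide_right_mono)
  then have "(real (card Ret) * green E v0 v0 + real n) * real (deg E v0) \<le> (real n * green E v0 v0) * real (deg E v0)"
    using d0 by (simp add: h_def field_simps)
  then have "real (card Ret) * green E v0 v0 + real n \<le> real n * green E v0 v0"
    using d0 mult_right_le_imp_le by blast
  then have key: "real n \<le> real (card NR) * green E v0 v0"
    using card by (smt (verit) left_diff_distrib' of_nat_add)
  have G1: "green E v0 v0 \<le> 1 / (1 - r)" by (rule green_v0_le)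
  have rl: "r < 1" by (rule r_lt)
  have "real n \<le> real (card NR) / (1 - r)"
    using key G1 mult_left_mono[OF G1, of "real (card NR)"] by simp
  then have "real n * (1 - r) \<le> real (card NR)" using rl by (simp add: field_simps)
  then have "1 - r \<le> real (card NR) / real n" using npos by (simp add: field_simps)
  then show ?thesis
    by (simp add: escape_prob_def I_count_def NR_def r_def)
qed


end
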